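(* For every $\mathcal{A}\subseteq\wp(\mathcal{G})$, $\mathrm{Ext}'(\mathcal{A})=\mathrm{Ext}(\mathcal{A})$, where $B\in\mathrm{Ext}'(\mathcal{A})$ iff either (i) there is some $f\in B$ with $f\in\mathcal{G}_{\gneq0}$, or (ii) there are finitely many $A_1,\ldots,A_n\in\mathcal{A}$ ($n\geq1$) such that for each $\langle g_1,\ldots,g_n\rangle\in A_1\times\cdots\times A_n$ with $0\notin\mathcal{E}(\{g_1,\ldots,g_n\})$, there exist $f\in B$ and $h\in\mathrm{posi}(\{g_1,\ldots,g_n\})$ with $f\geq h$.
   Context: $\Omega$ is a non-empty set and $\mathcal{G}$ is the set of bounded functions $\Omega\to\mathbb{R}$. $f\geq g$ means pointwise $\geq$; $f\gneq g$ means $f\geq g$ and $f\neq g$; $\mathcal{G}_{\gneq 0}=\{f: f\gneq 0\}$. $\mathrm{posi}(B)=\{\sum_{i=1}^m\lambda_i h_i: m\geq1,\lambda_i>0,h_i\in B\}$, and $\mathcal{E}(E):=\mathrm{posi}(E\cup\mathcal{G}_{\gneq 0})$. Definition of $\mathrm{Ext}$: if $\mathcal{A}\neq\emptyset$, $B\in\mathrm{Ext}(\mathcal{A})$ iff there are finitely many $A_1,\ldots,A_n\in\mathcal{A}$ ($n\geq1$) such that for each $\langle g_1,\ldots,g_n\rangle\in A_1\times\cdots\times A_n$ with $0\notin\mathcal{E}(\{g_1,\ldots,g_n\})$, there is some $f\in B$ with $f\in\mathcal{E}(\{g_1,\ldots,g_n\})$. If $\mathcal{A}=\emptyset$, $B\in\mathrm{Ext}(\emptyset)$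 iff $B\cap\mathcal{G}_{\gneq0}\neq\emptyset$. *)

theory Defs
  imports Complex_Main
begin

text \<open>Omega is the (nonempty) type 'a. Gambles are bounded real functions on 'a.\<close>

definition gambles :: "('a \<Rightarrow> real) set" where
  "gambles = {f. \<exists>c. \<forall>x. \<bar>f x\<bar> \<le> c}"

definition gneq0 :: "('a \<Rightarrow> real) set" where
  "gneq0 = {f. f \<in> gambles \<and> (\<forall>x. f x \<ge> 0) \<and> f \<noteq> (\<lambda>x. 0)}"

definition posi :: "('a \<Rightarrow> real) set \<Rightarrow> ('a \<Rightarrow> real) set" where
  "posi B = {f. \<exists>m::nat. m \<ge> 1 \<and> (\<exists>lam h. (\<forall>i<m. lam i > (0::real) \<and> h i \<in> B)
                  \<and> f = (\<lambda>x. \<Sum>i<m. lam i * h i x))}"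

definition natext :: "('a \<Rightarrow> real) set \<Rightarrow> ('a \<Rightarrow> real) set" where
  "natext E = posi (E \<union> gneq0)"

definition Ext :: "('a \<Rightarrow> real) set set \<Rightarrow> ('a \<Rightarrow> real) set set" where
  "Ext \<A> = (if \<A> = {} then {B. B \<subseteq> gambles \<and> B \<inter> gneq0 \<noteq> {}}
    else {B. B \<subseteq> gambles \<and>
      (\<exists>n::nat. n \<ge> 1 \<and> (\<exists>A. (\<forall>i<n. A i \<in> \<A>) \<and>
        (\<forall>g. (\<forall>i<n. g i \<in> A i) \<longrightarrow> (\<lambda>x. 0) \<notin> natext (g ` {..<n}) \<longrightarrow>
           (\<exists>f\<in>B. f \<in> natext (g ` {..<n})))))})"

definition Ext' :: "('a \<Rightarrow> real) set set \<Rightarrow> ('a \<Rightarrow> real) set set" where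
  "Ext' \<A> = {B. B \<subseteq> gambles \<and>
     ((\<exists>f\<in>B. f \<in> gneq0) \<or>
      (\<exists>n::nat. n \<ge> 1 \<and> (\<exists>A. (\<forall>i<n. A i \<in> \<A>) \<and>
        (\<forall>g. (\<forall>i<n. g i \<in> A i) \<longrightarrow> (\<lambda>x. 0) \<notin> natext (g ` {..<n}) \<longrightarrow>
           (\<exists>f\<in>B. \<exists>h\<in>posi (g ` {..<n}). \<forall>x. f x \<ge> h x)))))}"

end

theory Submission
  imports Defs
begin

lemma posi_single: "b \<in> B \<Longrightarrow> c > 0 \<Longrightarrow> (\<lambda>x. c * b x) \<in> posi B"
  unfolding posi_def
  by (rule CollectI, rule exI[of _ 1], auto intro!: exI[of _ "\<lambda>_. c"] exI[of _ "\<lambda>_. b"])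

lemma posi_add_single:
  assumes "f \<in> posi B" "b \<in> B" "c > 0"
  shows "(\<lambda>x. f x + c * b x) \<in> posi B"
proof -
  from assms(1) obtain m :: nat and lam h where m: "m \<ge> 1" "\<forall>i<m. lam i > (0::real) \<and> h i \<in> B"
    "f = (\<lambda>x. \<Sum>i<m. lam i * h i x)" unfolding posi_def by auto
  define lam' where "lam' = lam(m := c)"
  define h' where "h' = h(m := b)"
  have "(\<lambda>x. f x + c * b x) = (\<lambda>x. \<Sum>i<Suc m. lam' i * h' i x)"
    using m(3) by (auto simp: lam'_def h'_def intro!: sum.cong)
  moreover have "\<forall>i<Suc m. lam' i > 0 \<and> h' i \<in> B"
    using m(2) assms by (auto simp: lam'_def h'_def less_Suc_eq)
  ultimately show ?thesis unfolding posi_def by (intro CollectI exI[of _ "Suc m"]) auto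
qed

lemma posi_mono: "B \<subseteq> C \<Longrightarrow> posi B \<subseteq> posi C"
  unfolding posi_def by blast

lemma sum_gambles:
  "(\<forall>i<(m::nat). h i \<in> gambles) \<Longrightarrow> (\<lambda>x. \<Sum>i<m. lam i * h i x) \<in> gambles"
proof (induction m)
  case 0
  then show ?case by (auto simp: gambles_def)
next
  case (Suc m)
  then obtain c1 where c1: "\<forall>x. \<bar>\<Sum>i<m. lam i * h i x\<bar> \<le> c1" by (auto simp: gambles_def)
  from Suc.prems obtain c2 where c2: "\<forall>x. \<bar>h m x\<bar> \<le> c2" by (auto simp: gambles_def)
  have "\<bar>\<Sum>i<Suc m. lam i * h i x\<bar> \<le> c1 + \<bar>lam m\<bar> * c2" for x
  proof -
    have "\<bar>\<Sum>i<Suc m. lam i * h i x\<bar> \<le> \<bar>\<Sum>i<m. lam i * h i x\<bar> + \<bar>lam m\<bar> * \<bar>h m x\<bar>"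
      by (simp add: abs_mult[symmetric] abs_triangle_ineq)
    also have "\<dots> \<le> c1 + \<bar>lam m\<bar> * c2"
      using c1 c2 by (intro add_mono mult_left_mono) auto
    finally show ?thesis .
  qed
  then show ?case by (auto simp: gambles_def)
qed

lemma posi_gambles: "B \<subseteq> gambles \<Longrightarrow> posi B \<subseteq> gambles"
  unfolding posi_def using sum_gambles by blast

lemma split_sum:
  assumes "\<forall>i<(m::nat). lam i > (0::real)" "\<forall>i<m. h i \<in> G \<or> (\<forall>x. h i x \<ge> 0)"
  shows "((\<forall>i<m. h i \<notin> G) \<longrightarrow> (\<forall>x. (\<Sum>i<m. lam i * h i x) \<ge> 0)) \<and>
         ((\<exists>i<m. h i \<in> G) \<longrightarrow> (\<exists>k\<in>posi G. \<forall>x. (\<Sum>i<m. lam i * h i x) \<ge> k x))"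
  using assms
proof (induction m)
  case 0
  then show ?case by simp
next
  case (Suc m)
  then have IH: "((\<forall>i<m. h i \<notin> G) \<longrightarrow> (\<forall>x. (\<Sum>i<m. lam i * h i x) \<ge> 0)) \<and>
         ((\<exists>i<m. h i \<in> G) \<longrightarrow> (\<exists>k\<in>posi G. \<forall>x. (\<Sum>i<m. lam i * h i x) \<ge> k x))" by auto
  have lm: "lam m > 0" using Suc.prems by auto
  show ?case
  proof (cases "h m \<in> G")
    case True
    show ?thesis
    proof (cases "\<exists>i<m. h i \<in> G")
      case True
      with IH obtain k where k: "k \<in> posi G" "\<forall>x. (\<Sum>i<m. lam i * h i x) \<ge> k x" by blast
      have "(\<lambda>x. k x + lam m * h m x) \<in> posi G" using posi_add_single[OF k(1) \<open>h m \<in> G\<close> lm] .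
      moreover have "\<forall>x. (\<Sum>i<Suc m. lam i * h i x) \<ge> k x + lam m * h m x" using k(2) by simp
      ultimately have "\<exists>k\<in>posi G. \<forall>x. (\<Sum>i<Suc m. lam i * h i x) \<ge> k x"
        by (intro bexI[of _ "\<lambda>x. k x + lam m * h m x"]) auto
      then show ?thesis using \<open>h m \<in> G\<close> by blast
    next
      case False
      with IH have nn: "\<forall>x. (\<Sum>i<m. lam i * h i x) \<ge> 0" by auto
      have "(\<lambda>x. lam m * h m x) \<in> posi G" using posi_single[OF \<open>h m \<in> G\<close> lm] .
      moreover have "\<forall>x. (\<Sum>i<Suc m. lam i * h i x) \<ge> lam m * h m x" using nn by simp
      ultimately have "\<exists>k\<in>posi G. \<forall>x. (\<Sum>i<Suc m. lam i * h i x) \<ge> k x"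
        by (intro bexI[of _ "\<lambda>x. lam m * h m x"]) auto
      then show ?thesis using \<open>h m \<in> G\<close> by blast
    qed
  next
    case False
    then have hm: "\<forall>x. h m x \<ge> 0" using Suc.prems by auto
    have ge: "\<forall>x. (\<Sum>i<Suc m. lam i * h i x) \<ge> (\<Sum>i<m. lam i * h i x)"
      using hm lm by simp
    show ?thesis
    proof (intro conjI impI)
      assume "\<forall>i<Suc m. h i \<notin> G"
      then have "\<forall>x. (\<Sum>i<m. lam i * h i x) \<ge> 0" using IH by auto
      then show "\<forall>x. (\<Sum>i<Suc m. lam i * h i x) \<ge> 0" using ge by (meson order_trans)
    next
      assume "\<exists>i<Suc m. h i \<in> G"
      then have "\<exists>i<m. h i \<in> G" using False less_Suc_eq by auto
      with IH obtain k where k: "k \<in> posi G" "\<forall>x. (\<Sum>i<m. lam i * h i x) \<ge> k x" by blast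
      then show "\<exists>k\<in>posi G. \<forall>x. (\<Sum>i<Suc m. lam i * h i x) \<ge> k x"
        using ge by (meson order_trans)
    qed
  qed
qed

lemma natext_cases:
  assumes "f \<in> natext G" "f \<in> gambles" "f \<notin> gneq0"
  shows "\<exists>k\<in>posi G. \<forall>x. f x \<ge> k x"
proof -
  from assms(1) obtain m :: nat and lam h where m: "m \<ge> 1" "\<forall>i<m. lam i > (0::real) \<and> h i \<in> G \<union> gneq0"
    "f = (\<lambda>x. \<Sum>i<m. lam i * h i x)" unfolding natext_def posi_def by auto
  have hyp: "\<forall>i<m. h i \<in> G \<or> (\<forall>x. h i x \<ge> 0)" using m(2) by (auto simp: gneq0_def)
  note S = split_sum[OF _ hyp] m(2)
  have "\<exists>i<m. h i \<in> G"
  proof (rule ccontr)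
    assume "\<not> ?thesis"
    then have nG: "\<forall>i<m. h i \<in> gneq0" using m(2) by auto
    then have nn: "\<forall>i<m. \<forall>x. h i x \<ge> 0" by (auto simp: gneq0_def)
    have "h 0 \<noteq> (\<lambda>x. 0)" using nG m(1) by (auto simp: gneq0_def)
    then obtain x where "h 0 x \<noteq> 0" by auto
    moreover have "h 0 x \<ge> 0" using nn m(1) by auto
    ultimately have h0: "h 0 x > 0" by linarith
    have "f x = lam 0 * h 0 x + (\<Sum>i\<in>{..<m} - {0}. lam i * h i x)"
      using m(1,3) by (simp add: sum.remove[of "{..<m}" 0])
    moreover have "(\<Sum>i\<in>{..<m} - {0}. lam i * h i x) \<ge> 0"
      using nn m(2) by (intro sum_nonneg mult_nonneg_nonneg) (auto simp: less_imp_le)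
    moreover have "lam 0 * h 0 x > 0" using h0 m(1,2) by auto
    ultimately have "f x > 0" by linarith
    moreover have "\<forall>x. f x \<ge> 0" using m(3) nn m(2)
      by (auto intro!: sum_nonneg mult_nonneg_nonneg simp: less_imp_le)
    ultimately have "f \<in> gneq0" using assms(2) by (auto simp: gneq0_def)
    with assms(3) show False by simp
  qed
  with S m(3) show ?thesis by auto
qed

theorem mainTheorem4:
  fixes \<A> :: "('a \<Rightarrow> real) set set"
  assumes "\<A> \<subseteq> Pow gambles"
  shows "Ext' \<A> = Ext \<A>"
proof (cases "\<A> = {}")
  case True
  then show ?thesis unfolding Ext'_def Ext_def by auto
next
  case False
  then obtain A0 where A0: "A0 \<in> \<A>" by auto
  show ?thesis
  proof
    show "Ext' \<A> \<subseteq> Ext \<A>"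
    proof
      fix B assume B: "B \<in> Ext' \<A>"
      then have Bg: "B \<subseteq> gambles" by (simp add: Ext'_def)
      show "B \<in> Ext \<A>"
      proof (cases "\<exists>f\<in>B. f \<in> gneq0")
        case True
        then obtain f where f: "f \<in> B" "f \<in> gneq0" by auto
        have "\<forall>G. f \<in> natext G"
          using posi_single[of f "_ \<union> gneq0" 1] f unfolding natext_def by auto
        then show ?thesis using False Bg f A0 unfolding Ext_def
          by (auto intro!: exI[of _ 1] exI[of _ "\<lambda>_. A0"])
      next
        case nf: False
        have d: "(\<exists>f\<in>B. f \<in> gneq0) \<or> (\<exists>(n::nat) A. n \<ge> 1 \<and> (\<forall>i<n. A i \<in> \<A>) \<and>
          (\<forall>g. (\<forall>i<n. g i \<in> A i) \<longrightarrow> (\<lambda>x. 0) \<notin> natext (g ` {..<n}) \<longrightarrow>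
           (\<exists>f\<in>B. \<exists>h\<in>posi (g ` {..<n}). \<forall>x. f x \<ge> h x)))"
          using B unfolding Ext'_def by simp
        have "\<exists>(n::nat) A. n \<ge> 1 \<and> (\<forall>i<n. A i \<in> \<A>) \<and>
          (\<forall>g. (\<forall>i<n. g i \<in> A i) \<longrightarrow> (\<lambda>x. 0) \<notin> natext (g ` {..<n}) \<longrightarrow>
           (\<exists>f\<in>B. \<exists>h\<in>posi (g ` {..<n}). \<forall>x. f x \<ge> h x))"
          using d
        proof (rule disjE)
          assume "\<exists>f\<in>B. f \<in> gneq0" with nf show ?thesis by blast
        qed
        then obtain n :: nat and A where nA: "n \<ge> 1" "\<forall>i<n. A i \<in> \<A>"
          "\<forall>g. (\<forall>i<n. g i \<in> A i) \<longrightarrow> (\<lambda>x. 0) \<notin> natext (g ` {..<n}) \<longrightarrow>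
           (\<exists>f\<in>B. \<exists>h\<in>posi (g ` {..<n}). \<forall>x. f x \<ge> h x)" by blast
        have "\<exists>f\<in>B. f \<in> natext (g ` {..<n})"
          if g: "\<forall>i<n. g i \<in> A i" "(\<lambda>x. 0) \<notin> natext (g ` {..<n})" for g
        proof -
          from nA(3) g obtain f h where fh: "f \<in> B" "h \<in> posi (g ` {..<n})" "\<forall>x. f x \<ge> h x"
            by blast
          have Gg: "g ` {..<n} \<subseteq> gambles" using g(1) nA(2) assms by blast
          have hp: "h \<in> natext (g ` {..<n})"
            using fh(2) posi_mono[of "g ` {..<n}" "g ` {..<n} \<union> gneq0"] unfolding natext_def by auto
          show ?thesis
          proof (cases "f = h")
            case True
            then show ?thesis using fh hp by auto
          next
            case ne: False
            define d where "d = (\<lambda>x. f x - h x)"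
            have hg: "h \<in> gambles" using posi_gambles[OF Gg] fh(2) by auto
            have fg: "f \<in> gambles" using fh(1) Bg by auto
            have "d \<in> gambles"
            proof -
              from hg obtain c1 where "\<forall>x. \<bar>h x\<bar> \<le> c1" by (auto simp: gambles_def)
              moreover from fg obtain c2 where "\<forall>x. \<bar>f x\<bar> \<le> c2" by (auto simp: gambles_def)
              ultimately have "\<forall>x. \<bar>d x\<bar> \<le> c2 + c1" unfolding d_def
                by (metis abs_triangle_ineq4 add_mono order_trans)
              then show ?thesis by (auto simp: gambles_def)
            qed
            moreover have "d \<noteq> (\<lambda>x. 0)"
            proof
              assume "d = (\<lambda>x. 0)"
              then have "\<forall>x. f x = h x" unfolding d_def by (metis eq_iff_diff_eq_0)
              with ne show False by auto
            qed
            ultimately have dg: "d \<in> gneq0" using fh(3) by (auto simp: gneq0_def d_def)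
            have "(\<lambda>x. h x + 1 * d x) \<in> natext (g ` {..<n})"
              unfolding natext_def using posi_add_single[of h _ d 1] hp dg
              unfolding natext_def by auto
            moreover have "(\<lambda>x. h x + 1 * d x) = f" by (auto simp: d_def)
            ultimately show ?thesis using fh(1) by auto
          qed
        qed
        then show ?thesis using False Bg nA(1,2) unfolding Ext_def
          by (auto intro!: exI[of _ n] exI[of _ A])
      qed
    qed
  next
    show "Ext \<A> \<subseteq> Ext' \<A>"
    proof
      fix B assume B: "B \<in> Ext \<A>"
      then have Bg: "B \<subseteq> gambles" using False by (simp add: Ext_def)
      show "B \<in> Ext' \<A>"
      proof (cases "\<exists>f\<in>B. f \<in> gneq0")
        case True
        then show ?thesis using Bg unfolding Ext'_def by auto
      next
        case nf: False
        from B False obtain n :: nat and A where nA: "n \<ge> 1" "\<forall>i<n. A i \<in> \<A>"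
          "\<forall>g. (\<forall>i<n. g i \<in> A i) \<longrightarrow> (\<lambda>x. 0) \<notin> natext (g ` {..<n}) \<longrightarrow>
           (\<exists>f\<in>B. f \<in> natext (g ` {..<n}))"
          unfolding Ext_def by auto
        have "\<exists>f\<in>B. \<exists>h\<in>posi (g ` {..<n}). \<forall>x. f x \<ge> h x"
          if g: "\<forall>i<n. g i \<in> A i" "(\<lambda>x. 0) \<notin> natext (g ` {..<n})" for g
        proof -
          from nA(3) g obtain f where f: "f \<in> B" "f \<in> natext (g ` {..<n})" by blast
          have "f \<notin> gneq0" using nf f by auto
          then show ?thesis using natext_cases[OF f(2)] f Bg by auto
        qed
        then show ?thesis using Bg nA(1,2) unfolding Ext'_def
          by (auto intro!: exI[of _ n] exI[of _ A])
      qed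
    qed
  qed
qed

end
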